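(* Let $\varepsilon>0$, $0<\alpha<1$, and let $\psi:\mathbb{R}\to\mathbb{R}$ be a $1$-periodic function of class $C^2$ with $\|\psi''\|_\infty^2\le \dfrac{8\pi^2}{8/\alpha+1/\varepsilon^2}$. Then every minimizer of $E$ over $\mathcal{A}$ is a graph curve.
   Context: Let $\Omega=\{(x,y)\in\mathbb{R}^2: y>\psi(x)\}$, $\overline{\Omega}=\{y\ge\psi(x)\}$, $\partial\Omega=\{y=\psi(x)\}$, $I=(0,1)$. The admissible set $\mathcal{A}$ consists of all $\gamma=(x,y)\in H^2(I;\mathbb{R}^2)$ (hence $C^1$ on $\bar I$) with $|\dot\gamma(t)|>0$ and $\gamma(t)\in\overline{\Omega}$ for all $t\in\bar I$, and $x(0)=0$, $x(1)=1$, $y(0)=y(1)$, $\dot\gamma(0)=\dot\gamma(1)$. For $\gamma\in\mathcal{A}$ let $L_\gamma=\int_I|\dot\gamma|\,dt$ and, with arc length $s$, $E[\gamma]=\int_0^{L_\gamma}[\varepsilon^2|\gamma_{ss}(s)|^2+\Theta(\gamma(s))]\,ds$, where $\Theta\equiv1$ on $\Omega$ and $\Theta\equiv\alpha$ on $\partial\Omega$. A minimizer is a $\gamma\in\mathcal{A}$ with $E[\gamma]=\inf_{\mathcal{A}}E$. A curve $\gamma=(x,y)\in\mathcal{A}$ is a graph curve if $x'(t)>0$ for all $t\in\bar I$. *)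

theory Defs
  imports "HOL-Analysis.Analysis"
begin

definition dcurve :: "(real \<Rightarrow> real \<times> real) \<Rightarrow> real \<Rightarrow> real \<times> real" where
  "dcurve \<gamma> t = vector_derivative \<gamma> (at t within {0..1})"

definition ddcurve :: "(real \<Rightarrow> real \<times> real) \<Rightarrow> real \<Rightarrow> real \<times> real" where
  "ddcurve \<gamma> t = vector_derivative (dcurve \<gamma>) (at t within {0..1})"

text \<open>Sobolev regularity H^2(I;R^2): gamma is differentiable on [0,1] and its derivative
  is the indefinite integral of a square-integrable function g (the weak second derivative).\<close>
definition H2_curve :: "(real \<Rightarrow> real \<times> real) \<Rightarrow> bool" where
  "H2_curve \<gamma> \<longleftrightarrow>
     (\<forall>t\<in>{0..1}. \<gamma> differentiable (at t within {0..1})) \<and>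
     (\<exists>g :: real \<Rightarrow> real \<times> real.
        g absolutely_integrable_on {0..1} \<and>
        (\<lambda>t. (norm (g t))\<^sup>2) integrable_on {0..1} \<and>
        (\<forall>t\<in>{0..1}. dcurve \<gamma> t = dcurve \<gamma> 0 + integral {0..t} g))"

definition Omega_cl :: "(real \<Rightarrow> real) \<Rightarrow> (real \<times> real) set" where
  "Omega_cl \<psi> = {p. snd p \<ge> \<psi> (fst p)}"

definition Theta :: "real \<Rightarrow> (real \<Rightarrow> real) \<Rightarrow> real \<times> real \<Rightarrow> real" where
  "Theta \<alpha> \<psi> p = (if snd p = \<psi> (fst p) then \<alpha> else 1)"

definition admissible :: "(real \<Rightarrow> real) \<Rightarrow> (real \<Rightarrow> real \<times> real) \<Rightarrow> bool" where
  "admissible \<psi> \<gamma> \<longleftrightarrow>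
     H2_curve \<gamma> \<and>
     (\<forall>t\<in>{0..1}. norm (dcurve \<gamma> t) > 0) \<and>
     (\<forall>t\<in>{0..1}. \<gamma> t \<in> Omega_cl \<psi>) \<and>
     fst (\<gamma> 0) = 0 \<and> fst (\<gamma> 1) = 1 \<and> snd (\<gamma> 0) = snd (\<gamma> 1) \<and>
     dcurve \<gamma> 0 = dcurve \<gamma> 1"

text \<open>Energy E[gamma] = int_0^L (eps^2 |gamma_ss|^2 + Theta(gamma)) ds, written in the
  parameter t via ds = |gamma'| dt and
  |gamma_ss|^2 = (|gamma''|^2 - (gamma''.gamma')^2/|gamma'|^2) / |gamma'|^4.\<close>
definition energy :: "real \<Rightarrow> real \<Rightarrow> (real \<Rightarrow> real) \<Rightarrow> (real \<Rightarrow> real \<times> real) \<Rightarrow> real" where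
  "energy \<epsilon> \<alpha> \<psi> \<gamma> = integral {0..1} (\<lambda>t.
      (let v = dcurve \<gamma> t; a = ddcurve \<gamma> t;
           curv2 = ((norm a)\<^sup>2 - (inner a v)\<^sup>2 / (norm v)\<^sup>2) / (norm v) ^ 4
       in (\<epsilon>\<^sup>2 * curv2 + Theta \<alpha> \<psi> (\<gamma> t)) * norm v))"

definition minimizer :: "real \<Rightarrow> real \<Rightarrow> (real \<Rightarrow> real) \<Rightarrow> (real \<Rightarrow> real \<times> real) \<Rightarrow> bool" where
  "minimizer \<epsilon> \<alpha> \<psi> \<gamma> \<longleftrightarrow>
     admissible \<psi> \<gamma> \<and> energy \<epsilon> \<alpha> \<psi> \<gamma> = Inf (energy \<epsilon> \<alpha> \<psi> ` {c. admissible \<psi> c})"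

definition graph_curve :: "(real \<Rightarrow> real) \<Rightarrow> (real \<Rightarrow> real \<times> real) \<Rightarrow> bool" where
  "graph_curve \<psi> \<gamma> \<longleftrightarrow> admissible \<psi> \<gamma> \<and> (\<forall>t\<in>{0..1}. fst (dcurve \<gamma> t) > 0)"

end

theory Submission
  imports Defs
begin

lemma telescope_const:
  fixes F :: "real \<Rightarrow> 'a::real_normed_vector" and K :: "real \<Rightarrow> real"
  assumes ab: "a \<le> b"
    and Kmono: "\<And>s t. a \<le> s \<Longrightarrow> s \<le> t \<Longrightarrow> t \<le> b \<Longrightarrow> K s \<le> K t"
    and loc: "\<And>\<eta>. \<eta> > 0 \<Longrightarrow> \<exists>\<delta>>0. \<forall>s t. a \<le> s \<longrightarrow> s \<le> t \<longrightarrow> t \<le> b \<longrightarrow> t - s < \<delta>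
                  \<longrightarrow> norm (F t - F s) \<le> \<eta> * (K t - K s)"
  shows "F b = F a"
proof -
  have bound: "norm (F b - F a) \<le> \<eta> * (K b - K a)" if eta: "\<eta> > 0" for \<eta>
  proof -
    obtain \<delta> where \<delta>: "\<delta> > 0" and H: "\<forall>s t. a \<le> s \<longrightarrow> s \<le> t \<longrightarrow> t \<le> b \<longrightarrow> t - s < \<delta>
                  \<longrightarrow> norm (F t - F s) \<le> \<eta> * (K t - K s)"
      using loc[OF eta] by blast
    define n :: nat where "n = Suc (nat \<lceil>(b - a) / \<delta>\<rceil>)"
    have npos: "real n > 0" by (simp add: n_def)
    have "(b - a) / \<delta> < real n" unfolding n_def by linarith
    then have "(b - a) < real n * \<delta>" using \<delta> by (simp add: field_simps)
    define h where "h = (b - a) / real n"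
    have h0: "h \<ge> 0" using ab npos by (simp add: h_def)
    have hd: "h < \<delta>" using \<open>(b - a) < real n * \<delta>\<close> npos by (simp add: h_def field_simps)
    have hn: "a + real n * h = b" using npos by (simp add: h_def)
    have "k \<le> n \<longrightarrow> norm (F (a + real k * h) - F a) \<le> \<eta> * (K (a + real k * h) - K a)" for k
    proof (induction k)
      case 0
      then show ?case by simp
    next
      case (Suc k)
      show ?case
      proof
        assume k: "Suc k \<le> n"
        let ?s = "a + real k * h" and ?t = "a + real (Suc k) * h"
        have le1: "a \<le> ?s" using h0 by simp
        have le2: "?s \<le> ?t" using h0 by (simp add: algebra_simps)
        have "?t \<le> a + real n * h" using k h0 by (intro add_left_mono mult_right_mono) auto
        then have le3: "?t \<le> b" using hn by simp
        have diff: "?t - ?s < \<delta>" using hd by (simp add: algebra_simps)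
        have "norm (F ?t - F ?s) \<le> \<eta> * (K ?t - K ?s)" using H le1 le2 le3 diff by blast
        moreover have "norm (F ?s - F a) \<le> \<eta> * (K ?s - K a)" using Suc k by simp
        moreover have "norm (F ?t - F a) \<le> norm (F ?t - F ?s) + norm (F ?s - F a)"
          using norm_triangle_ineq[of "F ?t - F ?s" "F ?s - F a"] by simp
        ultimately show "norm (F ?t - F a) \<le> \<eta> * (K ?t - K a)"
          by (simp add: algebra_simps)
      qed
    qed
    then show ?thesis using hn by (metis order_refl)
  qed
  have D: "K b - K a \<ge> 0" using Kmono[of a b] ab by simp
  have "norm (F b - F a) \<le> 0 + e" if "e > 0" for e
  proof -
    have "norm (F b - F a) \<le> (e / (K b - K a + 1)) * (K b - K a)"
      using bound[of "e / (K b - K a + 1)"] that D by simp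
    also have "\<dots> \<le> e" using D that by (simp add: field_simps)
    finally show ?thesis by simp
  qed
  then have "norm (F b - F a) \<le> 0" by (rule field_le_epsilon)
  then show ?thesis by simp
qed

lemma leb_diff:
  fixes g :: "real \<Rightarrow> 'b::euclidean_space"
  assumes g: "g integrable_on {0..1}"
  obtains N where "negligible N"
    "\<And>t. t \<in> {0<..<1} \<Longrightarrow> t \<notin> N \<Longrightarrow> ((\<lambda>s. integral {0..s} g) has_vector_derivative g t) (at t)"
proof -
  define f where "f x = (if x \<in> {0..1} then g x else 0)" for x
  have fU: "f integrable_on UNIV" using g unfolding f_def integrable_restrict_UNIV .
  have f1: "f integrable_on cbox a b" for a b
    using integrable_on_subcbox[OF fU] by auto
  define f2 where "f2 x = f (-x)" for x
  have f2c: "f2 integrable_on cbox a b" for a b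
    using integrable_reflect[where f=f and a="-b" and b="-a"] f1[of "-b" "-a"] unfolding f2_def by simp
  obtain N1 where N1: "negligible N1"
    "\<And>x e. \<lbrakk>x \<notin> N1; 0 < e\<rbrakk> \<Longrightarrow> \<exists>d>0. \<forall>h. 0 < h \<and> h < d \<longrightarrow>
         norm(integral (cbox x (x + h *\<^sub>R One)) f /\<^sub>R h ^ DIM(real) - f x) < e"
    using integrable_ccontinuous_explicit[of f] f1 by blast
  obtain N2 where N2: "negligible N2"
    "\<And>x e. \<lbrakk>x \<notin> N2; 0 < e\<rbrakk> \<Longrightarrow> \<exists>d>0. \<forall>h. 0 < h \<and> h < d \<longrightarrow>
         norm(integral (cbox x (x + h *\<^sub>R One)) f2 /\<^sub>R h ^ DIM(real) - f2 x) < e"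
    using integrable_ccontinuous_explicit[of f2] f2c by blast
  have R1: "\<exists>d>0. \<forall>h. 0 < h \<and> h < d \<longrightarrow> norm(integral {x..x+h} f /\<^sub>R h - f x) < e"
    if "x \<notin> N1" "0 < e" for x e
    using N1(2)[OF that] by (simp add: cbox_interval)
  have R2: "\<exists>d>0. \<forall>h. 0 < h \<and> h < d \<longrightarrow> norm(integral {x..x+h} f2 /\<^sub>R h - f2 x) < e"
    if "x \<notin> N2" "0 < e" for x e
    using N2(2)[OF that] by (simp add: cbox_interval)
  define N where "N = N1 \<union> uminus ` N2"
  have negN: "negligible N"
    unfolding N_def
  proof (rule negligible_Un[OF N1(1)])
    show "negligible (uminus ` N2)"
      by (rule negligible_differentiable_image_negligible[OF _ N2(1)])
         (auto intro!: derivative_intros simp: differentiable_on_def)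
  qed
  have navg: "norm (X - h *\<^sub>R c) = h * norm (X /\<^sub>R h - c)" if "h > 0" for X c :: 'b and h :: real
  proof -
    have "X - h *\<^sub>R c = h *\<^sub>R (X /\<^sub>R h - c)" using that by (simp add: algebra_simps)
    then show ?thesis using that by simp
  qed
  have gi: "g integrable_on {a..b}" if "0 \<le> a" "b \<le> 1" for a b
    using integrable_on_subinterval[OF g] that by auto
  have Icomb: "integral {0..y} g - integral {0..x} g = integral {x..y} g"
    if "0 \<le> x" "x \<le> y" "y \<le> 1" for x y
    using Henstock_Kurzweil_Integration.integral_combine[where a=0 and c=x and b=y and f=g] that gi[of 0 y] by (simp add: algebra_simps)
  have fg: "integral {x..y} f = integral {x..y} g" if "0 \<le> x" "y \<le> 1" for x y
    by (rule integral_cong) (use that in \<open>auto simp: f_def\<close>)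
  have der: "((\<lambda>s. integral {0..s} g) has_vector_derivative g t) (at t)"
    if t: "t \<in> {0<..<1}" "t \<notin> N" for t
    unfolding has_vector_derivative_def has_derivative_at_alt
  proof (intro conjI allI impI)
    show "bounded_linear (\<lambda>h. h *\<^sub>R g t)" by (rule bounded_linear_scaleR_left)
    fix e :: real assume e: "e > 0"
    have tN1: "t \<notin> N1" and tN2: "-t \<notin> N2" using t by (auto simp: N_def image_iff)
    obtain d1 where d1: "d1 > 0" "\<forall>h. 0 < h \<and> h < d1 \<longrightarrow> norm(integral {t..t+h} f /\<^sub>R h - f t) < e"
      using R1[OF tN1 e] by blast
    obtain d2 where d2: "d2 > 0" "\<forall>h. 0 < h \<and> h < d2 \<longrightarrow> norm(integral {-t..-t+h} f2 /\<^sub>R h - f2 (-t)) < e"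
      using R2[OF tN2 e] by force
    have ft: "f t = g t" "f2 (-t) = g t" using t by (auto simp: f_def f2_def)
    define d where "d = min (min d1 d2) (min t (1-t))"
    have dpos: "d > 0" using d1 d2 t by (simp add: d_def)
    show "\<exists>d>0. \<forall>y. norm (y - t) < d \<longrightarrow>
          norm (integral {0..y} g - integral {0..t} g - (y - t) *\<^sub>R g t) \<le> e * norm (y - t)"
    proof (intro exI[of _ d] conjI allI impI dpos)
      fix y assume y: "norm (y - t) < d"
      consider "t < y" | "y = t" | "y < t" by linarith
      then show "norm (integral {0..y} g - integral {0..t} g - (y - t) *\<^sub>R g t) \<le> e * norm (y - t)"
      proof cases
        case 1
        define h where "h = y - t"
        have h: "h > 0" "h < d1" "y \<le> 1" using 1 y by (auto simp: h_def d_def)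
        have "integral {0..y} g - integral {0..t} g = integral {t..t+h} f"
          using Icomb[of t y] fg[of t y] t h 1 by (simp add: h_def)
        moreover have "norm (integral {t..t+h} f /\<^sub>R h - f t) < e" using d1 h by blast
        ultimately show ?thesis using navg[OF h(1), of "integral {t..t+h} f" "g t"] ft h 1
          by (simp add: h_def)
      next
        case 2 then show ?thesis by simp
      next
        case 3
        define h where "h = t - y"
        have h: "h > 0" "h < d2" "0 \<le> y" using 3 y by (auto simp: h_def d_def)
        have ee: "integral {0..t} g - integral {0..y} g = integral {y..t} g"
          using Icomb[of y t] t h 3 by simp
        have "integral {0..y} g - integral {0..t} g = - integral {y..t} g"
          unfolding ee[symmetric] by simp
        also have "integral {y..t} g = integral {y..t} f" using fg[of y t] t h by simp
        also have "\<dots> = integral {-t..-y} f2"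
          unfolding f2_def by (rule Henstock_Kurzweil_Integration.integral_reflect_real[symmetric])
        also have "\<dots> = integral {-t..-t+h} f2" by (simp add: h_def)
        finally have eq: "integral {0..y} g - integral {0..t} g - (y - t) *\<^sub>R g t
            = - (integral {-t..-t+h} f2 - h *\<^sub>R g t)" by (simp add: h_def algebra_simps)
        have "norm (integral {-t..-t+h} f2 /\<^sub>R h - f2 (-t)) < e" using d2 h by blast
        then show ?thesis unfolding eq norm_minus_cancel
          using navg[OF h(1), of "integral {-t..-t+h} f2" "g t"] ft h 3
          by (simp add: h_def)
      qed
    qed
  qed
  show ?thesis using that negN der by blast
qed

lemma exp_taylor1: "norm (exp (z::complex) - 1 - z) \<le> exp (norm z) * (norm z)^2"
  using Taylor_exp_field[of z 1] by (simp add: numeral_2_eq_2 diff_diff_eq)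

lemma exp_taylor0: "norm (exp (z::complex) - 1) \<le> exp (norm z) * norm z"
  using Taylor_exp_field[of z 0] by simp

lemma integral_cmult_c:
  fixes c :: "'a::{real_normed_algebra,banach}"
  shows "f integrable_on S \<Longrightarrow> integral S (\<lambda>x. c * f x) = c * integral S f"
  by (rule integral_unique, rule has_integral_mult_right, rule integrable_integral)

lemma integrable_cmult_c:
  fixes c :: "'a::{real_normed_algebra,banach}"
  shows "f integrable_on S \<Longrightarrow> (\<lambda>x. c * f x) integrable_on S"
  unfolding integrable_on_def using has_integral_mult_right by blast

lemma exp_solution:
  fixes V G :: "real \<Rightarrow> complex"
  assumes Vc: "continuous_on {0..1} V"
    and Vnz: "\<And>t. t \<in> {0..1} \<Longrightarrow> V t \<noteq> 0"
    and G: "G absolutely_integrable_on {0..1}"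
    and VG: "\<And>t. t \<in> {0..1} \<Longrightarrow> V t = V 0 + integral {0..t} G"
    and t0: "t0 \<in> {0..1}"
  shows "V t0 = V 0 * exp (integral {0..t0} (\<lambda>r. G r / V r))"
proof -
  define \<mu> where "\<mu> r = G r / V r" for r
  have cV: "continuous_on {0..1} (\<lambda>r. inverse (V r))"
    using Vc Vnz by (intro continuous_on_inverse) auto
  have "(\<lambda>r. inverse (V r) * G r) absolutely_integrable_on {0..1}"
    apply (rule absolutely_integrable_bounded_measurable_product[OF bilinear_times _ _ _ G])
    using continuous_imp_measurable_on_sets_lebesgue[OF cV] compact_continuous_image[OF cV]
      compact_imp_bounded by auto
  moreover have "\<mu> = (\<lambda>r. inverse (V r) * G r)" by (auto simp: \<mu>_def divide_inverse mult.commute fun_eq_iff)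
  ultimately have \<mu>abs: "\<mu> absolutely_integrable_on {0..1}" by simp
  have \<mu>i: "\<mu> integrable_on {a..b}" if "0 \<le> a" "b \<le> 1" for a b
    using integrable_on_subinterval[OF set_lebesgue_integral_eq_integral(1)[OF \<mu>abs]] that by auto
  have n\<mu>i: "(\<lambda>r. norm (\<mu> r)) integrable_on {a..b}" if "0 \<le> a" "b \<le> 1" for a b
    using integrable_on_subinterval[OF absolutely_integrable_on_def[THEN iffD1, OF \<mu>abs, THEN conjunct2]] that by auto
  have Gi: "G integrable_on {a..b}" if "0 \<le> a" "b \<le> 1" for a b
    using integrable_on_subinterval[OF set_lebesgue_integral_eq_integral(1)[OF G]] that by auto
  define Z where "Z t = integral {0..t} \<mu>" for t
  define K where "K t = integral {0..t} (\<lambda>r. norm (\<mu> r))" for t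
  define F where "F t = V t * exp (- Z t)" for t
  have GV: "G r = V r * \<mu> r" if "r \<in> {0..1}" for r using Vnz[OF that] by (simp add: \<mu>_def)
  have Zinc: "Z t - Z s = integral {s..t} \<mu>" if "0 \<le> s" "s \<le> t" "t \<le> 1" for s t
    using Henstock_Kurzweil_Integration.integral_combine[where a=0 and c=s and b=t and f=\<mu>] that \<mu>i[of 0 t]
    by (simp add: Z_def algebra_simps)
  have Kinc: "K t - K s = integral {s..t} (\<lambda>r. norm (\<mu> r))" if "0 \<le> s" "s \<le> t" "t \<le> 1" for s t
    using Henstock_Kurzweil_Integration.integral_combine[where a=0 and c=s and b=t and f="\<lambda>r. norm (\<mu> r)"] that n\<mu>i[of 0 t]
    by (simp add: K_def algebra_simps)
  have Vinc: "V t - V s = integral {s..t} (\<lambda>r. V r * \<mu> r)" if "0 \<le> s" "s \<le> t" "t \<le> 1" for s t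
  proof -
    have "V t - V s = integral {0..t} G - integral {0..s} G" using VG[of t] VG[of s] that by simp
    also have "\<dots> = integral {s..t} G"
      using Henstock_Kurzweil_Integration.integral_combine[where a=0 and c=s and b=t and f=G] that Gi[of 0 t]
      by (simp add: algebra_simps)
    also have "\<dots> = integral {s..t} (\<lambda>r. V r * \<mu> r)"
      by (rule integral_cong) (use GV that in auto)
    finally show ?thesis .
  qed
  have VMi: "(\<lambda>r. V r * \<mu> r) integrable_on {a..b}" if "0 \<le> a" "b \<le> 1" for a b
  proof -
    have "G integrable_on {a..b}" using Gi that by auto
    then show ?thesis by (rule integrable_eq) (use GV that in auto)
  qed
  have Kmono: "K s \<le> K t" if "0 \<le> s" "s \<le> t" "t \<le> 1" for s t
  proof -
    have "0 \<le> integral {s..t} (\<lambda>r. norm (\<mu> r))"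
      by (rule integral_nonneg) (use n\<mu>i that in auto)
    then show ?thesis using Kinc[OF that] by simp
  qed
  have K0: "K 0 = 0" by (simp add: K_def)
  have ZK: "norm (Z t) \<le> K t" if "0 \<le> t" "t \<le> 1" for t
    unfolding Z_def K_def
    by (rule Henstock_Kurzweil_Integration.integral_norm_bound_integral) (use \<mu>i n\<mu>i that in auto)
  obtain CV where CV: "CV > 0" "\<And>r. r \<in> {0..1} \<Longrightarrow> norm (V r) \<le> CV"
    using compact_imp_bounded[OF compact_continuous_image[OF Vc]] unfolding bounded_pos by auto
  define CZ where "CZ = exp (K 1)"
  have CZpos: "CZ > 0" by (simp add: CZ_def)
  have eZ: "norm (exp (- Z s)) \<le> CZ" if "0 \<le> s" "s \<le> 1" for s
  proof -
    have "norm (exp (- Z s)) = exp (Re (- Z s))" by simp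
    also have "\<dots> \<le> exp (norm (Z s))" using abs_Re_le_cmod[of "Z s"] by simp
    also have "\<dots> \<le> exp (K 1)" using ZK[OF that] Kmono[of s 1] that by simp
    finally show ?thesis by (simp add: CZ_def)
  qed
  have Kuc: "uniformly_continuous_on {0..1} K"
    unfolding K_def
    by (rule compact_uniformly_continuous[OF indefinite_integral_continuous_1]) (use n\<mu>i in auto)
  have Vuc: "uniformly_continuous_on {0..1} V"
    by (rule compact_uniformly_continuous[OF Vc]) auto
  have loc: "\<exists>\<delta>>0. \<forall>s t. 0 \<le> s \<longrightarrow> s \<le> t \<longrightarrow> t \<le> t0 \<longrightarrow> t - s < \<delta>
                  \<longrightarrow> norm (F t - F s) \<le> \<eta> * (K t - K s)" if eta: "\<eta> > 0" for \<eta>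
  proof -
    define \<rho>1 where "\<rho>1 = min 1 (\<eta> / (12 * CZ * CV))"
    define \<rho>2 where "\<rho>2 = \<eta> / (2 * CZ)"
    have \<rho>1: "\<rho>1 > 0" "\<rho>1 \<le> 1" "6 * CZ * CV * \<rho>1 \<le> \<eta> / 2"
      using eta CZpos CV by (auto simp: \<rho>1_def field_simps min_def)
    have \<rho>2: "\<rho>2 > 0" "CZ * \<rho>2 = \<eta> / 2" using eta CZpos by (auto simp: \<rho>2_def)
    obtain \<delta>1 where \<delta>1: "\<delta>1 > 0" "\<And>s t. s \<in> {0..1} \<Longrightarrow> t \<in> {0..1} \<Longrightarrow> dist t s < \<delta>1 \<Longrightarrow> dist (K t) (K s) < \<rho>1"
      using Kuc \<rho>1(1) unfolding uniformly_continuous_on_def by metis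
    obtain \<delta>2 where \<delta>2: "\<delta>2 > 0" "\<And>s t. s \<in> {0..1} \<Longrightarrow> t \<in> {0..1} \<Longrightarrow> dist t s < \<delta>2 \<Longrightarrow> dist (V t) (V s) < \<rho>2"
      using Vuc \<rho>2(1) unfolding uniformly_continuous_on_def by metis
    show ?thesis
    proof (intro exI[of _ "min \<delta>1 \<delta>2"] conjI allI impI)
      show "min \<delta>1 \<delta>2 > 0" using \<delta>1 \<delta>2 by simp
      fix s t assume s0: "0 \<le> s" and st: "s \<le> t" and tt0: "t \<le> t0" and d: "t - s < min \<delta>1 \<delta>2"
      have t1: "t \<le> 1" using tt0 t0 by simp
      define \<kappa> where "\<kappa> = K t - K s"
      define \<zeta> where "\<zeta> = Z t - Z s"
      define e where "e = exp (- \<zeta>)"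
      have \<kappa>0: "\<kappa> \<ge> 0" using Kmono[OF s0 st t1] by (simp add: \<kappa>_def)
      have \<kappa>\<rho>: "\<kappa> < \<rho>1" using \<delta>1(2)[of s t] s0 st t1 d \<kappa>0 by (simp add: \<kappa>_def dist_real_def)
      have \<zeta>\<kappa>: "norm \<zeta> \<le> \<kappa>"
        unfolding \<zeta>_def \<kappa>_def Zinc[OF s0 st t1] Kinc[OF s0 st t1]
        by (rule Henstock_Kurzweil_Integration.integral_norm_bound_integral) (use \<mu>i n\<mu>i s0 t1 in auto)
      have \<kappa>1: "\<kappa> \<le> 1" using \<kappa>\<rho> \<rho>1 by simp
      have e3: "exp (norm \<zeta>) \<le> 3"
        using \<zeta>\<kappa> \<kappa>1 exp_le by (meson exp_le_cancel_iff order_trans)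
      have E1: "norm (e - 1 + \<zeta>) \<le> 3 * \<kappa>^2"
      proof -
        have "norm (e - 1 + \<zeta>) \<le> exp (norm \<zeta>) * (norm \<zeta>)^2"
          using exp_taylor1[of "-\<zeta>"] by (simp add: e_def)
        also have "\<dots> \<le> 3 * \<kappa>^2"
          using e3 \<zeta>\<kappa> by (intro mult_mono power_mono) auto
        finally show ?thesis .
      qed
      have E0: "norm (e - 1) \<le> 3 * \<kappa>"
      proof -
        have "norm (e - 1) \<le> exp (norm \<zeta>) * norm \<zeta>"
          using exp_taylor0[of "-\<zeta>"] by (simp add: e_def)
        also have "\<dots> \<le> 3 * \<kappa>"
          using e3 \<zeta>\<kappa> by (intro mult_mono) auto
        finally show ?thesis .
      qed
      have ptw: "norm ((e * V r - V s) * \<mu> r) \<le> (3 * \<kappa> * CV + \<rho>2) * norm (\<mu> r)"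
        if r: "r \<in> {s..t}" for r
      proof -
        have r1: "r \<in> {0..1}" using r s0 t1 by auto
        have "norm (e * V r - V s) = norm ((e - 1) * V r + (V r - V s))" by (simp add: algebra_simps)
        also have "\<dots> \<le> norm (e - 1) * norm (V r) + norm (V r - V s)"
          by (metis norm_mult norm_triangle_ineq)
        also have "\<dots> \<le> 3 * \<kappa> * CV + \<rho>2"
        proof (rule add_mono)
          show "norm (e - 1) * norm (V r) \<le> 3 * \<kappa> * CV"
            using E0 CV(2)[OF r1] \<kappa>0 by (intro mult_mono) auto
          have "dist (V r) (V s) < \<rho>2" using \<delta>2(2)[of s r] r s0 t1 d by (auto simp: dist_real_def)
          then show "norm (V r - V s) \<le> \<rho>2" by (simp add: dist_norm)
        qed
        finally show ?thesis by (simp add: norm_mult mult_right_mono)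
      qed
      have Iexp: "integral {s..t} (\<lambda>r. (e * V r - V s) * \<mu> r) = e * (V t - V s) - V s * \<zeta>"
      proof -
        have "integral {s..t} (\<lambda>r. (e * V r - V s) * \<mu> r)
              = integral {s..t} (\<lambda>r. e * (V r * \<mu> r) - V s * \<mu> r)"
          by (simp add: algebra_simps)
        also have "\<dots> = e * integral {s..t} (\<lambda>r. V r * \<mu> r) - V s * integral {s..t} \<mu>"
          using VMi[OF s0 t1] \<mu>i[OF s0 t1]
          by (simp add: integral_diff integrable_cmult_c integral_cmult_c)
        finally show ?thesis using Vinc[OF s0 st t1] Zinc[OF s0 st t1] by (simp add: \<zeta>_def)
      qed
      have Fdiff: "F t - F s = exp (- Z s) * (V s * (e - 1 + \<zeta>) + integral {s..t} (\<lambda>r. (e * V r - V s) * \<mu> r))"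
      proof -
        have "exp (- Z t) = exp (- Z s) * e" by (simp add: e_def \<zeta>_def exp_add[symmetric])
        then show ?thesis unfolding Iexp F_def by (simp add: algebra_simps)
      qed
      have intb: "norm (integral {s..t} (\<lambda>r. (e * V r - V s) * \<mu> r)) \<le> (3 * \<kappa> * CV + \<rho>2) * \<kappa>"
      proof -
        have "norm (integral {s..t} (\<lambda>r. (e * V r - V s) * \<mu> r))
              \<le> integral {s..t} (\<lambda>r. (3 * \<kappa> * CV + \<rho>2) * norm (\<mu> r))"
        proof (rule Henstock_Kurzweil_Integration.integral_norm_bound_integral)
          show "(\<lambda>r. (e * V r - V s) * \<mu> r) integrable_on {s..t}"
            using VMi[OF s0 t1] \<mu>i[OF s0 t1]
            by (simp add: algebra_simps integrable_diff integrable_cmult_c)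
          show "(\<lambda>r. (3 * \<kappa> * CV + \<rho>2) * norm (\<mu> r)) integrable_on {s..t}"
            using n\<mu>i[OF s0 t1] by (simp add: integrable_cmult_c)
        qed (use ptw in auto)
        also have "\<dots> = (3 * \<kappa> * CV + \<rho>2) * \<kappa>"
          using Kinc[OF s0 st t1] by (simp add: \<kappa>_def)
        finally show ?thesis .
      qed
      have "norm (F t - F s) \<le> CZ * (CV * (3 * \<kappa>^2) + (3 * \<kappa> * CV + \<rho>2) * \<kappa>)"
      proof -
        have "norm (F t - F s) = norm (exp (- Z s)) * norm (V s * (e - 1 + \<zeta>) + integral {s..t} (\<lambda>r. (e * V r - V s) * \<mu> r))"
          unfolding Fdiff norm_mult ..
        also have "\<dots> \<le> CZ * (CV * (3 * \<kappa>^2) + (3 * \<kappa> * CV + \<rho>2) * \<kappa>)"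
        proof (rule mult_mono)
          show "norm (exp (- Z s)) \<le> CZ" using eZ s0 st t1 by simp
          have "norm (V s * (e - 1 + \<zeta>)) \<le> CV * (3 * \<kappa>^2)"
            unfolding norm_mult using CV(2)[of s] s0 st t1 E1 CV(1) by (intro mult_mono) auto
          then show "norm (V s * (e - 1 + \<zeta>) + integral {s..t} (\<lambda>r. (e * V r - V s) * \<mu> r))
                \<le> CV * (3 * \<kappa>^2) + (3 * \<kappa> * CV + \<rho>2) * \<kappa>"
            using intb norm_triangle_ineq order_trans add_mono by blast
        qed (use CZpos in auto)
        finally show ?thesis .
      qed
      also have "\<dots> = \<kappa> * (6 * CZ * CV * \<kappa>) + \<kappa> * (CZ * \<rho>2)" by (simp add: algebra_simps power2_eq_square)
      also have "\<dots> \<le> \<kappa> * (\<eta> / 2) + \<kappa> * (\<eta> / 2)"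
      proof (intro add_mono mult_left_mono \<kappa>0)
        have "6 * CZ * CV * \<kappa> \<le> 6 * CZ * CV * \<rho>1"
          using \<kappa>\<rho> CZpos CV by (intro mult_left_mono) auto
        then show "6 * CZ * CV * \<kappa> \<le> \<eta> / 2" using \<rho>1 by linarith
        show "CZ * \<rho>2 \<le> \<eta> / 2" using \<rho>2 by simp
      qed
      also have "\<dots> = \<eta> * (K t - K s)" by (simp add: \<kappa>_def algebra_simps)
      finally show "norm (F t - F s) \<le> \<eta> * (K t - K s)" .
    qed
  qed
  have "F t0 = F 0"
    by (rule telescope_const[where K=K]) (use t0 Kmono loc in auto)
  then have "V t0 * exp (- Z t0) = V 0" by (simp add: F_def Z_def)
  then have "V t0 = V 0 * exp (Z t0)"
    by (metis exp_minus_inverse mult.assoc mult.commute mult_1)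
  moreover have "\<mu> = (\<lambda>r. G r / V r)" by (simp add: fun_eq_iff \<mu>_def)
  ultimately show ?thesis by (simp add: Z_def)
qed

lemma mu_absint:
  fixes V G :: "real \<Rightarrow> complex"
  assumes Vc: "continuous_on {0..1} V"
    and Vnz: "\<And>t. t \<in> {0..1} \<Longrightarrow> V t \<noteq> 0"
    and G: "G absolutely_integrable_on {0..1}"
  shows "(\<lambda>r. G r / V r) absolutely_integrable_on {0..1}"
proof -
  have cV: "continuous_on {0..1} (\<lambda>r. inverse (V r))"
    using Vc Vnz by (intro continuous_on_inverse) auto
  have "(\<lambda>r. inverse (V r) * G r) absolutely_integrable_on {0..1}"
    apply (rule absolutely_integrable_bounded_measurable_product[OF bilinear_times _ _ _ G])
    using continuous_imp_measurable_on_sets_lebesgue[OF cV] compact_continuous_image[OF cV]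
      compact_imp_bounded by auto
  moreover have "(\<lambda>r. G r / V r) = (\<lambda>r. inverse (V r) * G r)"
    by (auto simp: divide_inverse mult.commute fun_eq_iff)
  ultimately show ?thesis by simp
qed

lemma turning:
  fixes V G :: "real \<Rightarrow> complex"
  assumes Vc: "continuous_on {0..1} V"
    and Vnz: "\<And>t. t \<in> {0..1} \<Longrightarrow> V t \<noteq> 0"
    and G: "G absolutely_integrable_on {0..1}"
    and VG: "\<And>t. t \<in> {0..1} \<Longrightarrow> V t = V 0 + integral {0..t} G"
    and per: "V 1 = V 0"
    and intV: "(V has_integral 1) {0..1}"
    and t0: "t0 \<in> {0..1}" "Re (V t0) \<le> 0"
  shows "pi \<le> integral {0..1} (\<lambda>r. \<bar>Im (G r / V r)\<bar>)"
proof -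
  define \<mu> where "\<mu> r = G r / V r" for r
  have \<mu>abs: "\<mu> absolutely_integrable_on {0..1}"
    unfolding \<mu>_def[abs_def] by (rule mu_absint[OF Vc Vnz G])
  have \<mu>i: "\<mu> integrable_on {a..b}" if "0 \<le> a" "b \<le> 1" for a b
    using integrable_on_subinterval[OF set_lebesgue_integral_eq_integral(1)[OF \<mu>abs]] that by auto
  define \<omega> where "\<omega> r = Im (\<mu> r)" for r
  have \<omega>abs: "\<omega> absolutely_integrable_on {0..1}"
  proof -
    have "(\<lambda>r. Im (\<mu> r)) absolutely_integrable_on {0..1}"
      using absolutely_integrable_linear[OF \<mu>abs bounded_linear_Im] by (simp add: o_def)
    then show ?thesis by (simp add: \<omega>_def[abs_def])
  qed
  have \<omega>i: "\<omega> integrable_on {a..b}" if "0 \<le> a" "b \<le> 1" for a b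
    using integrable_on_subinterval[OF set_lebesgue_integral_eq_integral(1)[OF \<omega>abs]] that by auto
  have a\<omega>i: "(\<lambda>r. \<bar>\<omega> r\<bar>) integrable_on {a..b}" if "0 \<le> a" "b \<le> 1" for a b
    using integrable_on_subinterval[OF absolutely_integrable_on_def[THEN iffD1, OF \<omega>abs, THEN conjunct2]] that
    by auto
  define Z where "Z t = integral {0..t} \<mu>" for t
  define \<theta> where "\<theta> t = integral {0..t} \<omega>" for t
  have \<theta>Z: "\<theta> t = Im (Z t)" if "0 \<le> t" "t \<le> 1" for t
  proof -
    have "(\<mu> has_integral Z t) {0..t}" unfolding Z_def using \<mu>i[of 0 t] that by auto
    from has_integral_Im[OF this] show ?thesis
      unfolding \<theta>_def \<omega>_def[abs_def] by (rule integral_unique)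
  qed
  have Vexp: "V t = V 0 * exp (Z t)" if "t \<in> {0..1}" for t
    using exp_solution[OF Vc Vnz G VG that] by (simp add: Z_def \<mu>_def[abs_def])
  have V0: "V 0 \<noteq> 0" using Vnz by simp
  define c where "c = cnj (V t0)"
  have t1ex: "\<exists>t1\<in>{0..1}. Re (V t1 * c) \<le> 0"
  proof (rule ccontr)
    assume "\<not> ?thesis"
    then have pos: "\<And>r. r \<in> {0..1} \<Longrightarrow> Re (V r * c) > 0" by force
    have cont: "continuous_on {0..1} (\<lambda>r. Re (V r * c))"
      by (intro continuous_intros Vc)
    obtain rm where rm: "rm \<in> {0..1}" "\<And>r. r \<in> {0..1} \<Longrightarrow> Re (V rm * c) \<le> Re (V r * c)"
      using continuous_attains_inf[OF compact_Icc _ cont] by fastforce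
    have hi: "((\<lambda>r. Re (V r * c)) has_integral Re c) {0..1}"
      using has_integral_Re[OF has_integral_mult_left[OF intV, of c]] by simp
    have "Re (V rm * c) * 1 \<le> Re c"
    proof -
      have "((\<lambda>r::real. Re (V rm * c)) has_integral Re (V rm * c) * 1) {0..1}"
        using has_integral_const_real[where c="Re (V rm * c)" and a=0 and b=1] by simp
      from has_integral_le[OF this hi] rm(2) show ?thesis by auto
    qed
    moreover have "Re c \<le> 0" using t0 by (simp add: c_def)
    ultimately show False using pos[OF rm(1)] by simp
  qed
  then obtain t1 where t1: "t1 \<in> {0..1}" "Re (V t1 * c) \<le> 0" by blast
  have cosle: "cos (\<theta> t1 - \<theta> t0) \<le> 0"
  proof -
    have "V t1 * c = V 0 * cnj (V 0) * exp (Z t1 + cnj (Z t0))"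
      unfolding c_def Vexp[OF t1(1)] Vexp[OF t0(1)] by (simp add: exp_cnj exp_add)
    also have "V 0 * cnj (V 0) = of_real ((norm (V 0))^2)" by (rule complex_norm_square[symmetric])
    finally have "Re (V t1 * c) = (norm (V 0))^2 * (exp (Re (Z t1) + Re (Z t0)) * cos (Im (Z t1) - Im (Z t0)))"
      by (simp add: Re_exp)
    moreover have "(norm (V 0))^2 * exp (Re (Z t1) + Re (Z t0)) > 0" using V0 by simp
    ultimately have "cos (Im (Z t1) - Im (Z t0)) \<le> 0" using t1(2)
      by (metis mult.assoc mult_pos_pos not_le)
    then show ?thesis using \<theta>Z t0(1) t1(1) by simp
  qed
  have e1: "exp (Z 1) = 1" using Vexp[of 1] per V0 by simp
  have cs1: "cos (\<theta> 1) = 1" "sin (\<theta> 1) = 0"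
  proof -
    have n: "exp (Re (Z 1)) = 1" using arg_cong[OF e1, of norm] by simp
    have "Re (exp (Z 1)) = 1" "Im (exp (Z 1)) = 0" using e1 by auto
    then show "cos (\<theta> 1) = 1" "sin (\<theta> 1) = 0"
      using n \<theta>Z[of 1] by (simp_all add: Re_exp Im_exp)
  qed
  have cos_half: "pi / 2 \<le> \<bar>x\<bar>" if "cos x \<le> 0" for x
  proof (rule ccontr)
    assume "\<not> ?thesis"
    then have "0 < cos x" by (intro cos_gt_zero_pi) auto
    then show False using that by simp
  qed
  define a where "a = min t0 t1"
  define b where "b = max t0 t1"
  have ab: "0 \<le> a" "a \<le> b" "b \<le> 1" using t0(1) t1(1) by (auto simp: a_def b_def)
  have cab: "cos (\<theta> b - \<theta> a) \<le> 0"
  proof (cases "t0 \<le> t1")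
    case True
    then show ?thesis using cosle by (simp add: a_def b_def)
  next
    case False
    then have "\<theta> b - \<theta> a = - (\<theta> t1 - \<theta> t0)" by (simp add: a_def b_def)
    then have "cos (\<theta> b - \<theta> a) = cos (\<theta> t1 - \<theta> t0)" by (simp only: cos_minus)
    then show ?thesis using cosle by simp
  qed
  have c2: "cos (\<theta> 1 - (\<theta> b - \<theta> a)) \<le> 0"
    using cab cs1 by (simp add: cos_diff)
  have comb: "integral {x..z} f = integral {x..y} f + integral {y..z} f"
    if "x \<le> y" "y \<le> z" "f integrable_on {x..z}" for x y z and f :: "real \<Rightarrow> real"
    using Henstock_Kurzweil_Integration.integral_combine[where a=x and c=y and b=z and f=f] that by simp
  have I1: "\<theta> b - \<theta> a = integral {a..b} \<omega>"
    unfolding \<theta>_def using comb[of 0 a b \<omega>] ab \<omega>i[of 0 b] by simp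
  have I2: "\<theta> 1 - (\<theta> b - \<theta> a) = integral {0..a} \<omega> + integral {b..1} \<omega>"
    unfolding \<theta>_def using comb[of 0 b 1 \<omega>] comb[of 0 a b \<omega>] ab \<omega>i[of 0 b] \<omega>i[of 0 1] by simp
  have bnd: "\<bar>integral {x..y} \<omega>\<bar> \<le> integral {x..y} (\<lambda>r. \<bar>\<omega> r\<bar>)" if "0 \<le> x" "y \<le> 1" for x y
    using Henstock_Kurzweil_Integration.integral_norm_bound_integral[of \<omega> "{x..y}" "\<lambda>r. \<bar>\<omega> r\<bar>"]
      \<omega>i[OF that] a\<omega>i[OF that] by simp
  have "pi / 2 \<le> integral {a..b} (\<lambda>r. \<bar>\<omega> r\<bar>)"
    using cos_half[OF cab] I1 bnd[of a b] ab by simp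
  moreover have "pi / 2 \<le> integral {0..a} (\<lambda>r. \<bar>\<omega> r\<bar>) + integral {b..1} (\<lambda>r. \<bar>\<omega> r\<bar>)"
  proof -
    have "pi / 2 \<le> \<bar>integral {0..a} \<omega> + integral {b..1} \<omega>\<bar>" using cos_half[OF c2] I2 by simp
    also have "\<dots> \<le> \<bar>integral {0..a} \<omega>\<bar> + \<bar>integral {b..1} \<omega>\<bar>" by (rule abs_triangle_ineq)
    also have "\<dots> \<le> integral {0..a} (\<lambda>r. \<bar>\<omega> r\<bar>) + integral {b..1} (\<lambda>r. \<bar>\<omega> r\<bar>)"
      using bnd[of 0 a] bnd[of b 1] ab by (intro add_mono) auto
    finally show ?thesis .
  qed
  moreover have "integral {0..1} (\<lambda>r. \<bar>\<omega> r\<bar>) = integral {0..a} (\<lambda>r. \<bar>\<omega> r\<bar>) + integral {a..b} (\<lambda>r. \<bar>\<omega> r\<bar>) + integral {b..1} (\<lambda>r. \<bar>\<omega> r\<bar>)"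
    using comb[of 0 b 1 "\<lambda>r. \<bar>\<omega> r\<bar>"] comb[of 0 a b "\<lambda>r. \<bar>\<omega> r\<bar>"] ab a\<omega>i[of 0 b] a\<omega>i[of 0 1] by simp
  ultimately have "pi \<le> integral {0..1} (\<lambda>r. \<bar>\<omega> r\<bar>)" by linarith
  then show ?thesis by (simp add: \<omega>_def \<mu>_def)
qed

lemma dcurve_of:
  assumes "\<And>t. t \<in> {0..1} \<Longrightarrow> (\<gamma> has_vector_derivative D t) (at t)" "t \<in> {0..1}"
  shows "dcurve \<gamma> t = D t"
  unfolding dcurve_def
  by (rule vector_derivative_within_closed_interval)
     (use assms in \<open>auto intro: has_vector_derivative_at_within\<close>)

lemma ddcurve_of:
  assumes d1: "\<And>t. t \<in> {0..1} \<Longrightarrow> (\<gamma> has_vector_derivative D t) (at t)"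
    and d2: "\<And>t. t \<in> {0..1} \<Longrightarrow> (D has_vector_derivative D2 t) (at t)"
    and t: "t \<in> {0..1}"
  shows "ddcurve \<gamma> t = D2 t"
  unfolding ddcurve_def
proof (rule vector_derivative_within_closed_interval)
  show "(dcurve \<gamma> has_vector_derivative D2 t) (at t within {0..1})"
  proof (rule has_vector_derivative_transform_within[of D _ _ _ 1])
    show "(D has_vector_derivative D2 t) (at t within {0..1})"
      using d2[OF t] by (rule has_vector_derivative_at_within)
  qed (use t dcurve_of[OF d1] in auto)
qed (use t in auto)

lemma curv_nonneg:
  fixes a v :: "real \<times> real"
  shows "0 \<le> ((norm a)\<^sup>2 - (inner a v)\<^sup>2 / (norm v)\<^sup>2) / (norm v) ^ 4"
proof (cases "v = 0")
  case True then show ?thesis by simp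
next
  case False
  have "\<bar>inner a v\<bar> \<le> norm a * norm v" by (rule Cauchy_Schwarz_ineq2)
  then have "(inner a v)\<^sup>2 \<le> (norm a * norm v)\<^sup>2"
    by (metis abs_ge_zero power2_abs power_mono)
  then have "(inner a v)\<^sup>2 / (norm v)\<^sup>2 \<le> (norm a)\<^sup>2"
    using False by (simp add: divide_le_eq power_mult_distrib)
  then show ?thesis by simp
qed

lemma energy_nonneg:
  assumes "0 < \<alpha>"
  shows "0 \<le> energy \<epsilon> \<alpha> \<psi> c"
proof -
  let ?h = "\<lambda>t. (let v = dcurve c t; a = ddcurve c t;
           curv2 = ((norm a)\<^sup>2 - (inner a v)\<^sup>2 / (norm v)\<^sup>2) / (norm v) ^ 4
       in (\<epsilon>\<^sup>2 * curv2 + Theta \<alpha> \<psi> (c t)) * norm v)"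
  have pos: "0 \<le> ?h t" for t
  proof -
    have th: "0 \<le> Theta \<alpha> \<psi> (c t)" using assms by (simp add: Theta_def)
    have k: "0 \<le> \<epsilon>\<^sup>2 * (((norm (ddcurve c t))\<^sup>2 - (inner (ddcurve c t) (dcurve c t))\<^sup>2 / (norm (dcurve c t))\<^sup>2) / (norm (dcurve c t)) ^ 4)"
      by (intro mult_nonneg_nonneg zero_le_power2 curv_nonneg)
    show ?thesis unfolding Let_def
      by (intro mult_nonneg_nonneg add_nonneg_nonneg k th norm_ge_zero)
  qed
  show ?thesis
  proof (cases "?h integrable_on {0..1}")
    case True
    then show ?thesis unfolding energy_def by (rule integral_nonneg) (use pos in auto)
  next
    case False
    then show ?thesis unfolding energy_def by (simp add: not_integrable_integral)
  qed
qed

lemma integral_le_const01: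
  fixes f :: "real \<Rightarrow> real"
  assumes "\<And>t. t \<in> {0..1} \<Longrightarrow> f t \<le> C" "0 \<le> C"
  shows "integral {0..1} f \<le> C"
proof (cases "f integrable_on {0..1}")
  case True
  have "integral {0..1} f \<le> integral {0..1} (\<lambda>t::real. C)"
    by (rule Henstock_Kurzweil_Integration.integral_le[OF True integrable_const_ivl]) (use assms in auto)
  then show ?thesis by simp
next
  case False
  then show ?thesis using assms by (simp add: not_integrable_integral)
qed

lemma Inf_le_energy:
  assumes "admissible \<psi> c" "0 < \<alpha>"
  shows "Inf (energy \<epsilon> \<alpha> \<psi> ` {c. admissible \<psi> c}) \<le> energy \<epsilon> \<alpha> \<psi> c"
proof (rule cInf_lower)
  show "energy \<epsilon> \<alpha> \<psi> c \<in> energy \<epsilon> \<alpha> \<psi> ` {c. admissible \<psi> c}" using assms by auto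
  show "bdd_below (energy \<epsilon> \<alpha> \<psi> ` {c. admissible \<psi> c})"
    using energy_nonneg[OF assms(2)] by (auto intro!: bdd_belowI[of _ 0])
qed

lemma competitor_line:
  fixes \<psi> :: "real \<Rightarrow> real"
  assumes cont: "continuous_on {0..1} \<psi>" and per: "\<psi> 1 = \<psi> 0" and \<alpha>: "0 < \<alpha>" "\<alpha> < 1"
  obtains c where "admissible \<psi> c" "energy \<epsilon> \<alpha> \<psi> c \<le> 1"
proof -
  obtain xm where xm: "xm \<in> {0..1}" "\<And>y. y \<in> {0..1} \<Longrightarrow> \<psi> y \<le> \<psi> xm"
    using continuous_attains_sup[OF compact_Icc _ cont] by fastforce
  define cm where "cm = \<psi> xm"
  define c where "c t = (t, cm)" for t :: real
  have d1: "(c has_vector_derivative (1, 0)) (at t)" for t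
    unfolding c_def[abs_def] by (auto intro!: derivative_eq_intros)
  have d2: "((\<lambda>t. (1::real, 0::real)) has_vector_derivative (0, 0)) (at t)" for t
    by (auto intro!: derivative_eq_intros simp: zero_prod_def)
  have dc: "dcurve c t = (1, 0)" if "t \<in> {0..1}" for t
    by (rule dcurve_of[OF _ that]) (use d1 in auto)
  have ddc: "ddcurve c t = (0, 0)" if "t \<in> {0..1}" for t
    by (rule ddcurve_of[OF _ _ that, of _ "\<lambda>t. (1,0)"]) (use d1 d2 in auto)
  have adm: "admissible \<psi> c"
    unfolding admissible_def H2_curve_def
  proof (intro conjI ballI exI[of _ "\<lambda>t. (0::real, 0::real)"])
    show "c differentiable at t within {0..1}" for t
      using d1[of t] by (meson differentiableI_vector has_vector_derivative_at_within)
    show "(\<lambda>t. (0::real, 0::real)) absolutely_integrable_on {0..1}"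
      by (simp add: zero_prod_def[symmetric])
    show "(\<lambda>t. (norm (0::real, 0::real))\<^sup>2) integrable_on {0..1}"
      by (simp add: zero_prod_def[symmetric] integrable_0)
  qed (use dc xm(2) in \<open>auto simp: c_def Omega_cl_def cm_def zero_prod_def[symmetric] integrable_0\<close>)
  have "energy \<epsilon> \<alpha> \<psi> c \<le> 1"
    unfolding energy_def
  proof (rule integral_le_const01)
    fix t :: real assume t: "t \<in> {0..1}"
    have "Theta \<alpha> \<psi> (c t) \<le> 1" using \<alpha> by (simp add: Theta_def)
    then show "(let v = dcurve c t; a = ddcurve c t;
           curv2 = ((norm a)\<^sup>2 - (inner a v)\<^sup>2 / (norm v)\<^sup>2) / (norm v) ^ 4
       in (\<epsilon>\<^sup>2 * curv2 + Theta \<alpha> \<psi> (c t)) * norm v) \<le> 1"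
      using dc[OF t] ddc[OF t] by (simp add: Let_def zero_prod_def[symmetric])
  qed simp
  then show ?thesis using that adm by blast
qed

lemma curv_bound:
  fixes a v :: "real \<times> real"
  assumes "1 \<le> norm v"
  shows "((norm a)\<^sup>2 - (inner a v)\<^sup>2 / (norm v)\<^sup>2) / (norm v) ^ 4 * norm v \<le> (norm a)\<^sup>2"
proof -
  define N where "N = norm v"
  have N: "1 \<le> N" using assms by (simp add: N_def)
  have eq: "((norm a)\<^sup>2 - (inner a v)\<^sup>2 / N\<^sup>2) / N ^ 4 * N = ((norm a)\<^sup>2 - (inner a v)\<^sup>2 / N\<^sup>2) / N ^ 3"
    using N by (simp add: field_simps power_eq_if)
  have "((norm a)\<^sup>2 - (inner a v)\<^sup>2 / N\<^sup>2) / N ^ 3 \<le> (norm a)\<^sup>2 / N ^ 3"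
    using N by (intro divide_right_mono) auto
  also have "\<dots> \<le> (norm a)\<^sup>2"
  proof -
    have "1 \<le> N ^ 3" using N by (simp add: one_le_power)
    then have "(norm a)\<^sup>2 * 1 \<le> (norm a)\<^sup>2 * N ^ 3" by (intro mult_left_mono) auto
    moreover have "0 < N ^ 3" using N by simp
    ultimately show ?thesis by (simp add: pos_divide_le_eq)
  qed
  finally show ?thesis using eq by (simp add: N_def)
qed

lemma sqrt_le_quad: "sqrt (1 + p\<^sup>2) \<le> 1 + p\<^sup>2 / 2" for p :: real
proof -
  have e: "(1 + p\<^sup>2 / 2)\<^sup>2 = 1 + p\<^sup>2 + (p\<^sup>2)\<^sup>2 / 4" by (simp add: power2_eq_square field_simps)
  have "1 + p\<^sup>2 \<le> (1 + p\<^sup>2 / 2)\<^sup>2" unfolding e using zero_le_power2[of "p\<^sup>2"] by linarith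
  then have "sqrt (1 + p\<^sup>2) \<le> sqrt ((1 + p\<^sup>2 / 2)\<^sup>2)" by (rule real_sqrt_le_mono)
  then show ?thesis by simp
qed

lemma competitor_graph:
  fixes \<psi> :: "real \<Rightarrow> real"
  assumes d\<psi>: "\<forall>x. \<psi> differentiable (at x)"
    and dd\<psi>: "\<forall>x. deriv \<psi> differentiable (at x)"
    and cont: "continuous_on UNIV (deriv (deriv \<psi>))"
    and per: "\<forall>x. \<psi> (x + 1) = \<psi> x"
    and bnd: "\<forall>x. (deriv (deriv \<psi>) x)\<^sup>2 \<le> B"
    and \<alpha>: "0 < \<alpha>"
  obtains c where "admissible \<psi> c" "energy \<epsilon> \<alpha> \<psi> c \<le> \<alpha> + B * (\<epsilon>\<^sup>2 + \<alpha> / 8)"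
proof -
  define \<psi>1 where "\<psi>1 = deriv \<psi>"
  define \<psi>2 where "\<psi>2 = deriv \<psi>1"
  have D1: "(\<psi> has_real_derivative \<psi>1 x) (at x)" for x
    using d\<psi> DERIV_deriv_iff_real_differentiable by (auto simp: \<psi>1_def)
  have D2: "(\<psi>1 has_real_derivative \<psi>2 x) (at x)" for x
    using dd\<psi> DERIV_deriv_iff_real_differentiable by (auto simp: \<psi>1_def \<psi>2_def)
  have B0: "0 \<le> B" using bnd by (meson order_trans zero_le_power2)
  have per1: "\<psi>1 (x + 1) = \<psi>1 x" for x
  proof -
    have "((\<lambda>x. \<psi> (x + 1)) has_real_derivative \<psi>1 (x + 1)) (at x)"
      using D1[of "x + 1"] DERIV_shift by blast
    moreover have "(\<lambda>x. \<psi> (x + 1)) = \<psi>" using per by auto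
    ultimately have "(\<psi> has_real_derivative \<psi>1 (x + 1)) (at x)" by simp
    then show ?thesis using D1[of x] DERIV_unique by blast
  qed
  obtain x0 where x0: "0 < x0" "x0 < 1" "\<psi>1 x0 = 0"
  proof -
    obtain z where "0 < z" "z < 1" "\<psi> 1 - \<psi> 0 = (1 - 0) * \<psi>1 z"
      using MVT2[of 0 1 \<psi> \<psi>1] D1 by auto
    moreover have "\<psi> 1 = \<psi> 0" using per[rule_format, of 0] by simp
    ultimately show ?thesis using that by auto
  qed
  have lip: "\<bar>\<psi>1 x - \<psi>1 y\<bar> \<le> sqrt B * \<bar>x - y\<bar>" for x y
  proof -
    have b2: "\<bar>\<psi>2 z\<bar> \<le> sqrt B" for z
      using bnd real_sqrt_le_mono[of "(\<psi>2 z)\<^sup>2" B] by (simp add: \<psi>2_def \<psi>1_def)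
    have main: "\<bar>\<psi>1 x - \<psi>1 y\<bar> \<le> sqrt B * \<bar>x - y\<bar>" if yx: "y < x" for x y
    proof -
      obtain z where "\<psi>1 x - \<psi>1 y = (x - y) * \<psi>2 z"
        using MVT2[of y x \<psi>1 \<psi>2] D2 yx by auto
      then have "\<bar>\<psi>1 x - \<psi>1 y\<bar> = \<bar>x - y\<bar> * \<bar>\<psi>2 z\<bar>" by (simp add: abs_mult)
      also have "\<dots> \<le> \<bar>x - y\<bar> * sqrt B" by (intro mult_left_mono b2) auto
      finally show ?thesis by (simp add: mult.commute)
    qed
    show ?thesis
    proof (cases "y < x")
      case True then show ?thesis using main[of y x] main[of x y] by simp
    next
      case False
      show ?thesis
      proof (cases "x = y")
        case True then show ?thesis by simp
      next
        case False2: False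
        then have "x < y" using False by simp
        then show ?thesis using main[of y x] main[of x y] by (simp add: abs_minus_commute)
      qed
    qed
  qed
  have p1: "(\<psi>1 x)\<^sup>2 \<le> B / 4" if "x \<in> {0..1}" for x
  proof -
    obtain y where y: "\<psi>1 y = 0" "\<bar>x - y\<bar> \<le> 1 / 2"
    proof (cases "\<bar>x - x0\<bar> \<le> 1/2")
      case True then show ?thesis using that x0 by blast
    next
      case False
      show ?thesis
      proof (cases "x > x0")
        case True
        have "\<psi>1 (x0 + 1) = 0" using per1 x0 by simp
        moreover have "\<bar>x - (x0 + 1)\<bar> \<le> 1/2" using True False \<open>x \<in> {0..1}\<close> x0 by (simp add: abs_if split: if_split_asm)
        ultimately show ?thesis using \<open>\<And>y. \<lbrakk>\<psi>1 y = 0; \<bar>x - y\<bar> \<le> 1 / 2\<rbrakk> \<Longrightarrow> thesis\<close> by blast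
      next
        case False2: False
        have "\<psi>1 (x0 - 1) = 0" using per1[of "x0 - 1"] x0 by simp
        moreover have "\<bar>x - (x0 - 1)\<bar> \<le> 1/2" using False2 False \<open>x \<in> {0..1}\<close> x0 by (simp add: abs_if split: if_split_asm)
        ultimately show ?thesis using \<open>\<And>y. \<lbrakk>\<psi>1 y = 0; \<bar>x - y\<bar> \<le> 1 / 2\<rbrakk> \<Longrightarrow> thesis\<close> by blast
      qed
    qed
    have "\<bar>\<psi>1 x\<bar> \<le> sqrt B * (1/2)"
    proof -
      have "\<bar>\<psi>1 x\<bar> = \<bar>\<psi>1 x - \<psi>1 y\<bar>" using y(1) by simp
      also have "\<dots> \<le> sqrt B * \<bar>x - y\<bar>" by (rule lip)
      also have "\<dots> \<le> sqrt B * (1/2)" by (rule mult_left_mono[OF y(2)]) (simp add: B0)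
      finally show ?thesis .
    qed
    then have "\<bar>\<psi>1 x\<bar>\<^sup>2 \<le> (sqrt B * (1/2))\<^sup>2" by (intro power_mono) auto
    also have "(sqrt B * (1/2))\<^sup>2 = B / 4" using B0 by (simp add: power_mult_distrib power_divide)
    finally show ?thesis by simp
  qed
  define c where "c t = (t, \<psi> t)" for t
  have dc1: "(c has_vector_derivative (1, \<psi>1 t)) (at t)" for t
    unfolding c_def[abs_def]
    by (intro has_vector_derivative_Pair has_vector_derivative_id)
       (use D1 has_real_derivative_iff_has_vector_derivative in blast)
  have dc2: "((\<lambda>t. (1::real, \<psi>1 t)) has_vector_derivative (0, \<psi>2 t)) (at t)" for t
    by (intro has_vector_derivative_Pair has_vector_derivative_const)
       (use D2 has_real_derivative_iff_has_vector_derivative in blast)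
  have dc: "dcurve c t = (1, \<psi>1 t)" if "t \<in> {0..1}" for t
    by (rule dcurve_of[OF _ that]) (use dc1 in auto)
  have ddc: "ddcurve c t = (0, \<psi>2 t)" if "t \<in> {0..1}" for t
    by (rule ddcurve_of[OF _ _ that, of _ "\<lambda>t. (1, \<psi>1 t)"]) (use dc1 dc2 in auto)
  have c2': "continuous_on {0..1} \<psi>2"
    using continuous_on_subset[OF cont] by (auto simp: \<psi>2_def \<psi>1_def)
  have c2: "continuous_on {0..1} (\<lambda>t. (0::real, \<psi>2 t))"
    using c2' by (auto intro!: continuous_intros)
  have adm: "admissible \<psi> c"
    unfolding admissible_def H2_curve_def
  proof (intro conjI ballI exI[of _ "\<lambda>t. (0::real, \<psi>2 t)"])
    show "c differentiable at t within {0..1}" for t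
      using dc1[of t] by (meson differentiableI_vector has_vector_derivative_at_within)
    show "(\<lambda>t. (0::real, \<psi>2 t)) absolutely_integrable_on {0..1}"
      using absolutely_integrable_continuous[of 0 1 "\<lambda>t. (0::real, \<psi>2 t)"] c2 by (simp add: cbox_interval)
    show "(\<lambda>t. (norm (0::real, \<psi>2 t))\<^sup>2) integrable_on {0..1}"
      by (rule integrable_continuous_interval) (use c2' in \<open>auto intro!: continuous_intros\<close>)
    fix t :: real assume t: "t \<in> {0..1}"
    have "((\<lambda>t. (0::real, \<psi>2 t)) has_integral ((1, \<psi>1 t) - (1, \<psi>1 0))) {0..t}"
      by (rule fundamental_theorem_of_calculus) (use t dc2 in \<open>auto intro: has_vector_derivative_at_within\<close>)
    then show "dcurve c t = dcurve c 0 + integral {0..t} (\<lambda>t. (0, \<psi>2 t))"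
      using dc t by (simp add: integral_unique)
    show "0 < norm (dcurve c t)" using dc[OF t] by (simp add: zero_prod_def)
    show "c t \<in> Omega_cl \<psi>" by (simp add: c_def Omega_cl_def)
  next
    show "fst (c 0) = 0" "fst (c 1) = 1" by (auto simp: c_def)
    show "snd (c 0) = snd (c 1)" using per[rule_format, of 0] by (simp add: c_def)
    show "dcurve c 0 = dcurve c 1" using dc[of 0] dc[of 1] per1[of 0] by simp
  qed
  have "energy \<epsilon> \<alpha> \<psi> c \<le> \<alpha> + B * (\<epsilon>\<^sup>2 + \<alpha> / 8)"
    unfolding energy_def
  proof (rule integral_le_const01)
    fix t :: real assume t: "t \<in> {0..1}"
    define v where "v = dcurve c t"
    define a where "a = ddcurve c t"
    have v: "v = (1, \<psi>1 t)" and a: "a = (0, \<psi>2 t)" using dc[OF t] ddc[OF t] by (auto simp: v_def a_def)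
    have nv: "norm v = sqrt (1 + (\<psi>1 t)\<^sup>2)" by (simp add: v norm_Pair)
    have nv1: "1 \<le> norm v" by (simp add: nv)
    have na: "(norm a)\<^sup>2 \<le> B" using bnd by (simp add: a norm_Pair \<psi>2_def \<psi>1_def)
    have th: "Theta \<alpha> \<psi> (c t) = \<alpha>" by (simp add: Theta_def c_def)
    define k where "k = ((norm a)\<^sup>2 - (inner a v)\<^sup>2 / (norm v)\<^sup>2) / (norm v) ^ 4"
    have k: "k * norm v \<le> B" using curv_bound[OF nv1, of a] na by (simp add: k_def)
    have nvb: "norm v \<le> 1 + B / 8"
      using sqrt_le_quad[of "\<psi>1 t"] p1[OF t] nv by simp
    have "(\<epsilon>\<^sup>2 * k + Theta \<alpha> \<psi> (c t)) * norm v = \<epsilon>\<^sup>2 * (k * norm v) + \<alpha> * norm v"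
      by (simp add: th algebra_simps)
    also have "\<dots> \<le> \<epsilon>\<^sup>2 * B + \<alpha> * (1 + B / 8)"
      using k nvb \<alpha> by (intro add_mono mult_left_mono) auto
    also have "\<dots> = \<alpha> + B * (\<epsilon>\<^sup>2 + \<alpha> / 8)" by (simp add: algebra_simps)
    finally show "(let v = dcurve c t; a = ddcurve c t;
           curv2 = ((norm a)\<^sup>2 - (inner a v)\<^sup>2 / (norm v)\<^sup>2) / (norm v) ^ 4
       in (\<epsilon>\<^sup>2 * curv2 + Theta \<alpha> \<psi> (c t)) * norm v) \<le> \<alpha> + B * (\<epsilon>\<^sup>2 + \<alpha> / 8)"
      by (simp add: Let_def k_def v_def a_def)
  qed (use B0 \<alpha> in auto)
  then show ?thesis using that adm by blast
qed

definition cpx :: "real \<times> real \<Rightarrow> complex" where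
  "cpx p = Complex (fst p) (snd p)"

lemma cpx_norm: "norm (cpx p) = norm p"
  by (cases p) (simp add: cpx_def norm_complex_def norm_Pair)

lemma cpx_bl: "bounded_linear cpx"
  by (rule bounded_linear_intro[where K=1]) (auto simp: cpx_def complex_eq_iff cpx_norm[unfolded cpx_def])

lemma cpx_add: "cpx (p + q) = cpx p + cpx q"
  by (simp add: cpx_def complex_eq_iff)

lemma cpx_10: "cpx (1, 0) = 1"
  by (simp add: cpx_def complex_eq_iff)

lemma curv_identity:
  fixes a v :: "real \<times> real"
  assumes "v \<noteq> 0"
  shows "((norm a)\<^sup>2 - (inner a v)\<^sup>2 / (norm v)\<^sup>2) / (norm v) ^ 4 * norm v
         = (Im (cpx a / cpx v))\<^sup>2 / norm v"
proof -
  obtain ax ay where a: "a = (ax, ay)" by (cases a)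
  obtain vx vy where v: "v = (vx, vy)" by (cases v)
  define n where "n = norm v"
  have n0: "n > 0" using assms by (simp add: n_def)
  have n2: "n\<^sup>2 = vx\<^sup>2 + vy\<^sup>2" by (simp add: n_def v norm_Pair)
  have a2: "(norm a)\<^sup>2 = ax\<^sup>2 + ay\<^sup>2" by (simp add: a norm_Pair)
  have inn: "inner a v = ax * vx + ay * vy" by (simp add: a v)
  have im: "Im (cpx a / cpx v) = (ay * vx - ax * vy) / n\<^sup>2"
    by (simp add: Im_divide cpx_def a v n2)
  have key: "(ax\<^sup>2 + ay\<^sup>2) * n\<^sup>2 - (ax * vx + ay * vy)\<^sup>2 = (ay * vx - ax * vy)\<^sup>2"
    unfolding n2 by (simp add: power2_eq_square algebra_simps)
  have "((norm a)\<^sup>2 - (inner a v)\<^sup>2 / (norm v)\<^sup>2) / (norm v) ^ 4 * norm v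
        = ((ax\<^sup>2 + ay\<^sup>2) * n\<^sup>2 - (ax * vx + ay * vy)\<^sup>2) / (n\<^sup>2 * n\<^sup>2 * n)"
    unfolding a2 inn n_def[symmetric] using n0 by (simp add: field_simps power_eq_if)
  also have "\<dots> = (ay * vx - ax * vy)\<^sup>2 / (n\<^sup>2 * n\<^sup>2 * n)" by (simp add: key)
  also have "\<dots> = (Im (cpx a / cpx v))\<^sup>2 / norm v"
    unfolding im n_def[symmetric] using n0 by (simp add: field_simps power_eq_if)
  finally show ?thesis .
qed

lemma curv_le_g:
  fixes a v :: "real \<times> real"
  assumes "v \<noteq> 0"
  shows "((norm a)\<^sup>2 - (inner a v)\<^sup>2 / (norm v)\<^sup>2) / (norm v) ^ 4 * norm v \<le> (norm a)\<^sup>2 / (norm v) ^ 3"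
proof -
  define N where "N = norm v"
  have N: "0 < N" using assms by (simp add: N_def)
  have eq: "((norm a)\<^sup>2 - (inner a v)\<^sup>2 / N\<^sup>2) / N ^ 4 * N = ((norm a)\<^sup>2 - (inner a v)\<^sup>2 / N\<^sup>2) / N ^ 3"
    using N by (simp add: field_simps power_eq_if)
  have "((norm a)\<^sup>2 - (inner a v)\<^sup>2 / N\<^sup>2) / N ^ 3 \<le> (norm a)\<^sup>2 / N ^ 3"
    using N by (intro divide_right_mono) auto
  then show ?thesis using eq by (simp add: N_def)
qed

lemma amgm_int:
  fixes w n lam :: real
  assumes "n > 0" "lam > 0"
  shows "\<bar>w\<bar> \<le> (lam / 2) * (w\<^sup>2 / n) + n / (2 * lam)"
proof -
  have "0 \<le> (lam * \<bar>w\<bar> - n)\<^sup>2" by simp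
  then have "2 * lam * n * \<bar>w\<bar> \<le> lam\<^sup>2 * w\<^sup>2 + n\<^sup>2"
    by (simp add: power2_eq_square algebra_simps)
  then have "\<bar>w\<bar> \<le> (lam\<^sup>2 * w\<^sup>2 + n\<^sup>2) / (2 * lam * n)"
    using assms by (simp add: field_simps)
  also have "\<dots> = (lam / 2) * (w\<^sup>2 / n) + n / (2 * lam)"
    using assms by (simp add: field_simps power2_eq_square)
  finally show ?thesis .
qed

theorem theorem3:
  fixes \<epsilon> \<alpha> :: real and \<psi> :: "real \<Rightarrow> real"
  assumes "\<epsilon> > 0" and "0 < \<alpha>" and "\<alpha> < 1"
    and "\<forall>x. \<psi> (x + 1) = \<psi> x"
    and "\<forall>x. \<psi> differentiable (at x)"
    and "\<forall>x. deriv \<psi> differentiable (at x)"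
    and "continuous_on UNIV (deriv (deriv \<psi>))"
    and "\<forall>x. (deriv (deriv \<psi>) x)\<^sup>2 \<le> 8 * pi\<^sup>2 / (8 / \<alpha> + 1 / \<epsilon>\<^sup>2)"
    and "minimizer \<epsilon> \<alpha> \<psi> \<gamma>"
  shows "graph_curve \<psi> \<gamma>"
proof (rule ccontr)
  assume ng: "\<not> graph_curve \<psi> \<gamma>"
  note eps = assms(1) and al0 = assms(2) and al1 = assms(3) and per = assms(4)
    and d\<psi> = assms(5) and dd\<psi> = assms(6) and cont2 = assms(7) and bnd = assms(8)
    and mini = assms(9)
  have adm: "admissible \<psi> \<gamma>" and Eq: "energy \<epsilon> \<alpha> \<psi> \<gamma> = Inf (energy \<epsilon> \<alpha> \<psi> ` {c. admissible \<psi> c})"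
    using mini by (auto simp: minimizer_def)
  obtain t0 where t0: "t0 \<in> {0..1}" "fst (dcurve \<gamma> t0) \<le> 0"
    using ng adm unfolding graph_curve_def by (auto simp: not_less)
  have H2: "H2_curve \<gamma>" and vpos: "\<And>t. t \<in> {0..1} \<Longrightarrow> norm (dcurve \<gamma> t) > 0"
    and e0: "fst (\<gamma> 0) = 0" and e1: "fst (\<gamma> 1) = 1" and ey: "snd (\<gamma> 0) = snd (\<gamma> 1)"
    and dper: "dcurve \<gamma> 0 = dcurve \<gamma> 1"
    using adm unfolding admissible_def by auto
  have gdiff: "\<And>t. t \<in> {0..1} \<Longrightarrow> \<gamma> differentiable (at t within {0..1})"
    using H2 unfolding H2_curve_def by auto
  obtain g where gabs: "g absolutely_integrable_on {0..1}"
    and g2: "(\<lambda>t. (norm (g t))\<^sup>2) integrable_on {0..1}"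
    and gv: "\<And>t. t \<in> {0..1} \<Longrightarrow> dcurve \<gamma> t = dcurve \<gamma> 0 + integral {0..t} g"
    using H2 unfolding H2_curve_def by blast
  define v where "v = dcurve \<gamma>"
  have gv': "v 0 + integral {0..t} g = v t" if "t \<in> {0..1}" for t
    using gv[OF that] unfolding v_def by (rule sym)
  have gi: "g integrable_on {0..1}" using gabs set_lebesgue_integral_eq_integral(1) by blast
  have vc: "continuous_on {0..1} v"
  proof -
    have "continuous_on {0..1} (\<lambda>t. v 0 + integral {0..t} g)"
      by (intro continuous_intros indefinite_integral_continuous_1 gi)
    then show ?thesis by (rule continuous_on_eq) (use gv' in auto)
  qed
  have vnz: "v t \<noteq> 0" if "t \<in> {0..1}" for t using vpos[OF that] by (auto simp: v_def)
  have \<gamma>der: "(\<gamma> has_vector_derivative v t) (at t within {0..1})" if "t \<in> {0..1}" for t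
    using gdiff[OF that] vector_derivative_works by (auto simp: v_def dcurve_def)
  have vint: "(v has_integral (1, 0)) {0..1}"
  proof -
    have "(v has_integral (\<gamma> 1 - \<gamma> 0)) {0..1}"
      by (rule fundamental_theorem_of_calculus) (use \<gamma>der in auto)
    moreover have "\<gamma> 1 - \<gamma> 0 = (1, 0)" using e0 e1 ey by (simp add: prod_eq_iff)
    ultimately show ?thesis by simp
  qed
  define V where "V t = cpx (v t)" for t
  define G where "G t = cpx (g t)" for t
  have Vc: "continuous_on {0..1} V"
    unfolding V_def[abs_def] using bounded_linear.continuous_on[OF cpx_bl vc] .
  have Vnz: "V t \<noteq> 0" if "t \<in> {0..1}" for t
    using vnz[OF that] cpx_norm[of "v t"] by (auto simp: V_def)
  have Gabs: "G absolutely_integrable_on {0..1}"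
    using absolutely_integrable_linear[OF gabs cpx_bl] by (simp add: G_def[abs_def] o_def)
  have VG: "V t = V 0 + integral {0..t} G" if "t \<in> {0..1}" for t
  proof -
    have "g integrable_on {0..t}" using integrable_on_subinterval[OF gi] that by auto
    then have "integral {0..t} G = cpx (integral {0..t} g)"
      using integral_linear[OF _ cpx_bl] by (simp add: G_def[abs_def] o_def)
    then show ?thesis using gv[OF that] by (simp add: V_def v_def cpx_add)
  qed
  have Vper: "V 1 = V 0" using dper by (simp add: V_def v_def)
  have Vint: "(V has_integral 1) {0..1}"
    using has_integral_linear[OF vint cpx_bl] by (simp add: V_def[abs_def] o_def cpx_10)
  have Vt0: "Re (V t0) \<le> 0" using t0 by (simp add: V_def cpx_def v_def)
  have turn: "pi \<le> integral {0..1} (\<lambda>r. \<bar>Im (G r / V r)\<bar>)"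
    by (rule turning[OF Vc Vnz Gabs VG Vper Vint t0(1) Vt0])
  define \<omega> where "\<omega> r = Im (G r / V r)" for r
  have \<mu>abs: "(\<lambda>r. G r / V r) absolutely_integrable_on {0..1}"
    by (rule mu_absint[OF Vc Vnz Gabs])
  have \<omega>abs: "\<omega> absolutely_integrable_on {0..1}"
    using absolutely_integrable_linear[OF \<mu>abs bounded_linear_Im] by (simp add: \<omega>_def[abs_def] o_def)
  have a\<omega>i: "(\<lambda>r. \<bar>\<omega> r\<bar>) integrable_on {0..1}"
    using absolutely_integrable_on_def[THEN iffD1, OF \<omega>abs, THEN conjunct2] by simp
  have nvc: "continuous_on {0..1} (\<lambda>t. norm (v t))" by (intro continuous_intros vc)
  have nvi: "(\<lambda>t. norm (v t)) integrable_on {0..1}"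
    by (rule integrable_continuous_interval[OF nvc])
  obtain m where m: "m > 0" "\<And>t. t \<in> {0..1} \<Longrightarrow> m \<le> norm (v t)"
  proof -
    obtain tm where tm: "tm \<in> {0..1}" "\<And>t. t \<in> {0..1} \<Longrightarrow> norm (v tm) \<le> norm (v t)"
      using continuous_attains_inf[OF compact_Icc _ nvc] by fastforce
    show ?thesis using that[of "norm (v tm)"] tm vnz[OF tm(1)] by auto
  qed
  define cn where "cn t = (\<omega> t)\<^sup>2 / norm (v t)" for t
  have \<omega>meas: "\<omega> \<in> borel_measurable (lebesgue_on {0..1})"
  proof -
    have S: "{0..1::real} \<in> sets lebesgue" by simp
    show ?thesis using absolutely_integrable_measurable[OF S, of \<omega>] \<omega>abs by simp
  qed
  have nvmeas: "(\<lambda>t. norm (v t)) \<in> borel_measurable (lebesgue_on {0..1})"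
    by (rule continuous_imp_measurable_on_sets_lebesgue[OF nvc]) auto
  have cn_meas: "cn \<in> borel_measurable (lebesgue_on {0..1})"
    unfolding cn_def by (intro borel_measurable_divide borel_measurable_power \<omega>meas nvmeas)
  have cn_id: "((norm (g t))\<^sup>2 - (inner (g t) (v t))\<^sup>2 / (norm (v t))\<^sup>2) / (norm (v t)) ^ 4 * norm (v t) = cn t"
    if "t \<in> {0..1}" for t
    using curv_identity[OF vnz[OF that], of "g t"] by (simp add: cn_def \<omega>_def G_def V_def)
  have cn_nn: "0 \<le> cn t" for t by (simp add: cn_def)
  have cn_bnd: "norm (cn t) \<le> (1 / m^3) * (norm (g t))\<^sup>2" if t: "t \<in> {0..1}" for t
  proof -
    have "cn t \<le> (norm (g t))\<^sup>2 / (norm (v t)) ^ 3"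
      using curv_le_g[OF vnz[OF t], of "g t"] cn_id[OF t] by simp
    also have "\<dots> \<le> (norm (g t))\<^sup>2 / m ^ 3"
      using m t vnz[OF t] by (intro divide_left_mono power_mono mult_pos_pos) auto
    finally show ?thesis using cn_nn[of t] by simp
  qed
  have cni: "cn integrable_on {0..1}"
  proof (rule measurable_bounded_by_integrable_imp_integrable[OF cn_meas _ cn_bnd])
    show "(\<lambda>t. 1 / m ^ 3 * (norm (g t))\<^sup>2) integrable_on {0..1}"
      using integrable_cmult_c[OF g2, of "1 / m^3"] by simp
  qed auto
  have \<gamma>c: "continuous_on {0..1} \<gamma>"
    by (rule differentiable_imp_continuous_on) (use gdiff in \<open>auto simp: differentiable_on_def\<close>)
  have \<psi>c: "continuous_on UNIV \<psi>"
    using d\<psi> by (auto intro!: continuous_at_imp_continuous_on differentiable_imp_continuous_within)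
  define Zs where "Zs = {t \<in> {0..1}. snd (\<gamma> t) - \<psi> (fst (\<gamma> t)) = 0}"
  have Zc: "closed Zs" unfolding Zs_def
  proof (rule continuous_closed_preimage_constant)
    show "continuous_on {0..1} (\<lambda>t. snd (\<gamma> t) - \<psi> (fst (\<gamma> t)))"
      by (intro continuous_intros \<gamma>c continuous_on_compose2[OF \<psi>c]) auto
  qed auto
  have Zcomp: "compact Zs"
  proof -
    have "compact ({0..1} \<inter> Zs)" by (rule compact_Int_closed[OF compact_Icc Zc])
    moreover have "{0..1} \<inter> Zs = Zs" by (auto simp: Zs_def)
    ultimately show ?thesis by simp
  qed
  have Zl: "Zs \<in> sets lebesgue" using lmeasurable_compact[OF Zcomp] by blast
  define \<Theta>f where "\<Theta>f t = (if t \<in> Zs then \<alpha> else 1)" for t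
  have \<Theta>eq: "Theta \<alpha> \<psi> (\<gamma> t) = \<Theta>f t" if "t \<in> {0..1}" for t
    using that by (simp add: Theta_def \<Theta>f_def Zs_def)
  have \<Theta>meas: "\<Theta>f \<in> borel_measurable (lebesgue_on {0..1})"
    unfolding \<Theta>f_def
  proof (rule measurable_If_set)
    show "Zs \<inter> space (lebesgue_on {0..1}) \<in> sets (lebesgue_on {0..1})"
      using Zl by (auto simp: sets_restrict_space_iff Zs_def)
  qed auto
  have \<Theta>prod: "(\<lambda>t. \<Theta>f t * norm (v t)) absolutely_integrable_on {0..1}"
  proof (rule absolutely_integrable_bounded_measurable_product_real[OF \<Theta>meas])
    show "bounded (\<Theta>f ` {0..1})"
      by (rule bounded_subset[of "{\<alpha>, 1}"]) (auto simp: \<Theta>f_def)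
    show "(\<lambda>t. norm (v t)) absolutely_integrable_on {0..1}"
      by (rule absolutely_integrable_continuous_real[OF nvc])
  qed auto
  have \<Theta>i: "(\<lambda>t. \<Theta>f t * norm (v t)) integrable_on {0..1}"
    using \<Theta>prod set_lebesgue_integral_eq_integral(1) by blast
  obtain N where N: "negligible N"
    "\<And>t. t \<in> {0<..<1} \<Longrightarrow> t \<notin> N \<Longrightarrow> ((\<lambda>s. integral {0..s} g) has_vector_derivative g t) (at t)"
    using leb_diff[OF gi] by blast
  have ddg: "ddcurve \<gamma> t = g t" if t: "t \<in> {0<..<1}" "t \<notin> N" for t
  proof -
    have "((\<lambda>s. v 0 + integral {0..s} g) has_vector_derivative g t) (at t)"
      using has_vector_derivative_add[OF has_vector_derivative_const N(2)[OF t]] by simp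
    then have "((\<lambda>s. v 0 + integral {0..s} g) has_vector_derivative g t) (at t within {0..1})"
      by (rule has_vector_derivative_at_within)
    then have "(v has_vector_derivative g t) (at t within {0..1})"
      by (rule has_vector_derivative_transform_within[where d=1]) (use t gv' in auto)
    then show ?thesis unfolding ddcurve_def v_def[symmetric]
      by (rule vector_derivative_within_closed_interval[rotated 2]) (use t in auto)
  qed
  define hg where "hg t = \<epsilon>\<^sup>2 * cn t + \<Theta>f t * norm (v t)" for t
  have Eeq: "energy \<epsilon> \<alpha> \<psi> \<gamma> = integral {0..1} hg"
    unfolding energy_def
  proof (rule integral_spike[of "N \<union> {0, 1}"])
    show "negligible (N \<union> {0, 1})" using N(1) by auto
    fix t assume t: "t \<in> {0..1} - (N \<union> {0, 1})"
    then have t': "t \<in> {0<..<1}" "t \<notin> N" "t \<in> {0..1}" by auto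
    show "hg t = (let v = dcurve \<gamma> t; a = ddcurve \<gamma> t;
           curv2 = ((norm a)\<^sup>2 - (inner a v)\<^sup>2 / (norm v)\<^sup>2) / (norm v) ^ 4
       in (\<epsilon>\<^sup>2 * curv2 + Theta \<alpha> \<psi> (\<gamma> t)) * norm v)"
    proof -
      define k where "k = ((norm (g t))\<^sup>2 - (inner (g t) (v t))\<^sup>2 / (norm (v t))\<^sup>2) / (norm (v t)) ^ 4"
      have kc: "k * norm (v t) = cn t" using cn_id[OF t'(3)] by (simp add: k_def)
      have "(\<epsilon>\<^sup>2 * k + \<Theta>f t) * norm (v t) = \<epsilon>\<^sup>2 * (k * norm (v t)) + \<Theta>f t * norm (v t)"
        by (simp add: algebra_simps)
      also have "\<dots> = hg t" by (simp only: kc hg_def)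
      finally have "hg t = (\<epsilon>\<^sup>2 * k + \<Theta>f t) * norm (v t)" by simp
      then show ?thesis
        unfolding Let_def ddg[OF t'(1,2)] v_def[symmetric] \<Theta>eq[OF t'(3)] k_def .
    qed
  qed
  define K where "K = integral {0..1} cn"
  define L where "L = integral {0..1} (\<lambda>t. norm (v t))"
  have lowb: "\<epsilon>\<^sup>2 * K + \<alpha> * L \<le> energy \<epsilon> \<alpha> \<psi> \<gamma>"
  proof -
    have "integral {0..1} (\<lambda>t. \<epsilon>\<^sup>2 * cn t + \<alpha> * norm (v t)) \<le> integral {0..1} hg"
    proof (rule Henstock_Kurzweil_Integration.integral_le)
      show "(\<lambda>t. \<epsilon>\<^sup>2 * cn t + \<alpha> * norm (v t)) integrable_on {0..1}"
        by (intro integrable_add integrable_cmult_c cni nvi)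
      show "hg integrable_on {0..1}"
        unfolding hg_def[abs_def] by (intro integrable_add integrable_cmult_c cni \<Theta>i)
      fix t :: real assume "t \<in> {0..1}"
      have "\<alpha> \<le> \<Theta>f t" using al1 by (simp add: \<Theta>f_def)
      then have "\<alpha> * norm (v t) \<le> \<Theta>f t * norm (v t)" by (rule mult_right_mono) simp
      then show "\<epsilon>\<^sup>2 * cn t + \<alpha> * norm (v t) \<le> hg t" by (simp add: hg_def)
    qed
    moreover have "integral {0..1} (\<lambda>t. \<epsilon>\<^sup>2 * cn t + \<alpha> * norm (v t)) = \<epsilon>\<^sup>2 * K + \<alpha> * L"
      using cni nvi by (simp add: K_def L_def integral_add integrable_cmult_c integral_cmult_c)
    ultimately show ?thesis using Eeq by simp
  qed
  have L1: "1 \<le> L"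
  proof -
    have "((\<lambda>t. fst (v t)) has_integral 1) {0..1}"
      using has_integral_linear[OF vint bounded_linear_fst] by (simp add: o_def)
    moreover have "fst (v t) \<le> norm (v t)" for t
    proof (cases "v t")
      case (Pair a b)
      then show ?thesis using norm_fst_le[of a b] abs_ge_self[of a] by simp
    qed
    ultimately show ?thesis
      unfolding L_def using has_integral_le integrable_integral[OF nvi] by blast
  qed
  have Kb: "pi\<^sup>2 / L \<le> K"
  proof -
    define lam where "lam = L / pi"
    have Lpos: "L > 0" using L1 by simp
    have lam: "lam > 0" using Lpos by (simp add: lam_def)
    have "integral {0..1} (\<lambda>r. \<bar>\<omega> r\<bar>) \<le> integral {0..1} (\<lambda>t. (lam / 2) * cn t + (1 / (2 * lam)) * norm (v t))"
    proof (rule Henstock_Kurzweil_Integration.integral_le[OF a\<omega>i])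
      show "(\<lambda>t. (lam / 2) * cn t + (1 / (2 * lam)) * norm (v t)) integrable_on {0..1}"
        by (intro integrable_add integrable_cmult_c cni nvi)
      fix t :: real assume t: "t \<in> {0..1}"
      have "norm (v t) > 0" using vnz[OF t] by simp
      from amgm_int[OF this lam, of "\<omega> t"]
      show "\<bar>\<omega> t\<bar> \<le> (lam / 2) * cn t + (1 / (2 * lam)) * norm (v t)"
        by (simp add: cn_def)
    qed
    also have "\<dots> = integral {0..1} (\<lambda>t. (lam / 2) * cn t) + integral {0..1} (\<lambda>t. (1 / (2 * lam)) * norm (v t))"
      by (rule integral_add) (intro integrable_cmult_c cni nvi)+
    also have "\<dots> = (lam / 2) * K + (1 / (2 * lam)) * L"
      by (simp only: integral_cmult_c[OF cni] integral_cmult_c[OF nvi] K_def L_def)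
    also have "(1 / (2 * lam)) * L = pi / 2" using Lpos by (simp add: lam_def field_simps)
    also have "(lam / 2) * K = L * K / (2 * pi)" by (simp add: lam_def)
    finally have "pi \<le> L * K / (2 * pi) + pi / 2" using turn by (simp add: \<omega>_def)
    then have "pi / 2 \<le> L * K / (2 * pi)" by linarith
    then have "pi / 2 * (2 * pi) \<le> L * K" by (subst (asm) pos_le_divide_eq) auto
    moreover have "pi / 2 * (2 * pi) = pi\<^sup>2" by (simp add: power2_eq_square)
    ultimately have "pi\<^sup>2 \<le> K * L" by (simp add: mult.commute)
    then show ?thesis using Lpos by (simp add: pos_divide_le_eq)
  qed
  define B where "B = 8 * pi\<^sup>2 / (8 / \<alpha> + 1 / \<epsilon>\<^sup>2)"
  have bndB: "\<forall>x. (deriv (deriv \<psi>) x)\<^sup>2 \<le> B" using bnd by (simp add: B_def)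
  obtain c1 where c1: "admissible \<psi> c1" "energy \<epsilon> \<alpha> \<psi> c1 \<le> \<alpha> + B * (\<epsilon>\<^sup>2 + \<alpha> / 8)"
    using competitor_graph[OF d\<psi> dd\<psi> cont2 per bndB al0] by blast
  have Bval: "B * (\<epsilon>\<^sup>2 + \<alpha> / 8) = pi\<^sup>2 * \<alpha> * \<epsilon>\<^sup>2"
  proof -
    have "0 < \<alpha> * 8 + \<epsilon> * (\<epsilon> * 64)" using al0 by (intro add_pos_nonneg) auto
    then show ?thesis using al0 eps by (simp add: B_def field_simps power2_eq_square)
  qed
  have \<psi>01: "\<psi> 1 = \<psi> 0" using per[rule_format, of 0] by simp
  obtain c2 where c2: "admissible \<psi> c2" "energy \<epsilon> \<alpha> \<psi> c2 \<le> 1"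
    using competitor_line[OF continuous_on_subset[OF \<psi>c] \<psi>01 al0 al1] by blast
  define E where "E = energy \<epsilon> \<alpha> \<psi> \<gamma>"
  have E1: "E \<le> \<alpha> + pi\<^sup>2 * \<alpha> * \<epsilon>\<^sup>2"
    using Inf_le_energy[OF c1(1) al0, of \<epsilon>] c1(2) Eq Bval by (simp add: E_def)
  have E2: "E \<le> 1"
    using Inf_le_energy[OF c2(1) al0, of \<epsilon>] c2(2) Eq by (simp add: E_def)
  have Lpos: "L > 0" using L1 by simp
  have Ege: "\<epsilon>\<^sup>2 * (pi\<^sup>2 / L) + \<alpha> * L \<le> E"
  proof -
    have "\<epsilon>\<^sup>2 * (pi\<^sup>2 / L) \<le> \<epsilon>\<^sup>2 * K" using Kb by (intro mult_left_mono) auto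
    then show ?thesis using lowb by (simp add: E_def)
  qed
  have P: "0 < \<epsilon>\<^sup>2 * (pi\<^sup>2 / L)" using eps Lpos by simp
  show False
  proof (cases "1 \<le> \<alpha> * L")
    case True
    then show False using Ege P E2 by linarith
  next
    case False
    then have "\<alpha> < 1 / L" using Lpos by (simp add: field_simps)
    then have "\<epsilon>\<^sup>2 * pi\<^sup>2 * \<alpha> < \<epsilon>\<^sup>2 * pi\<^sup>2 * (1 / L)"
      using eps by (intro mult_strict_left_mono) auto
    moreover have "\<alpha> \<le> \<alpha> * L" using L1 al0 by simp
    ultimately have "\<alpha> + pi\<^sup>2 * \<alpha> * \<epsilon>\<^sup>2 < \<epsilon>\<^sup>2 * (pi\<^sup>2 / L) + \<alpha> * L"
      by (simp add: algebra_simps)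
    then show False using Ege E1 by linarith
  qed
qed

end
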